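(* Let $p$ be a prime number and let $x,y,z\in\mathbb{N}$ (positive integers) with $x\le y\le z$ satisfy $$\frac{4}{p}=\frac{1}{x}+\frac{1}{y}+\frac{1}{z}.$$ Then $$4xy-(x+y)p=\gcd(y,p)\,\gcd(xy,\,x+y).$$
   Context: $\mathbb{N}$ denotes the positive integers. *)

theory Defs
  imports Complex_Main "HOL-Computational_Algebra.Primes"
begin

end

theory Submission
  imports Defs
begin

theorem theorem1:
  fixes p x y z :: nat
  assumes "prime p"
    and "x > 0" and "y > 0" and "z > 0"
    and "x \<le> y" and "y \<le> z"
    and "4 / real p = 1 / real x + 1 / real y + 1 / real z"
  shows "4 * int x * int y - (int x + int y) * int p
         = int (gcd y p) * int (gcd (x * y) (x + y))"
proof -
  have p0: "p > 0" using assms(1) prime_gt_0_nat by blast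
  have eqr: "4 * real x * real y * real z = real p * (real x * real y + real y * real z + real z * real x)"
    using assms(7) p0 assms(2-4) by (simp add: field_simps)
  hence eqn: "4 * x * y * z = p * (x * y + y * z + z * x)"
    by (metis (mono_tags, opaque_lifting) of_nat_add of_nat_mult of_nat_numeral of_nat_eq_iff)
  have "4 * x * (y * z) = p * (x * y + y * z + z * x)" using eqn by (simp add: ac_simps)
  also have "\<dots> \<le> p * (3 * (y * z))"
  proof -
    have "x * y \<le> y * z" using assms by (simp add: mult_mono)
    moreover have "z * x \<le> y * z" using assms by (simp add: mult_mono)
    ultimately have "x * y + y * z + z * x \<le> 3 * (y * z)" by linarith
    thus ?thesis by (rule mult_le_mono2)
  qed
  finally have "4 * x * (y * z) \<le> (3 * p) * (y * z)" by (simp add: ac_simps)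
  hence x4: "4 * x \<le> 3 * p" using assms(3,4) by simp
  hence xp: "x < p" using assms(2) by linarith
  define D where "D = 4 * int x * int y - (int x + int y) * int p"
  define M where "M = gcd (x * y) (x + y)"
  have zD: "int z * D = int p * int x * int y"
  proof -
    have "int (4 * x * y * z) = int (p * (x * y + y * z + z * x))" using eqn by simp
    thus ?thesis unfolding D_def by (simp add: algebra_simps)
  qed
  have Dpos: "D > 0"
  proof -
    have "int z * D > 0" using zD p0 assms(2,3) by simp
    thus ?thesis using assms(4) by (simp add: zero_less_mult_iff)
  qed
  have Dle: "D \<le> int p * int x"
  proof -
    have "int y * D \<le> int z * D" using assms(6) Dpos by (simp add: mult_right_mono)
    hence "int y * D \<le> int y * (int p * int x)" using zD by (simp add: ac_simps)
    thus ?thesis using assms(3) by simp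
  qed
  have d1: "D dvd int p * int x * int y" using zD by (metis dvd_triv_right)
  have d2: "D dvd int p ^ 2 * (int x + int y)"
  proof -
    have "int p ^ 2 * (int x + int y) = 4 * (int p * int x * int y) - int p * D"
      unfolding D_def by (simp add: algebra_simps power2_eq_square)
    thus ?thesis using d1 by simp
  qed
  have Mg: "int M = gcd (int x * int y) (int x + int y)" unfolding M_def
    by (metis gcd_int_int_eq of_nat_add of_nat_mult)
  have d3: "D dvd int p ^ 2 * int M"
  proof -
    have "int p ^ 2 * (int x * int y) = int p * (int p * int x * int y)" by (simp add: power2_eq_square ac_simps)
    hence "D dvd int p ^ 2 * (int x * int y)" using d1 by (metis dvd_mult)
    hence "D dvd gcd (int p ^ 2 * (int x * int y)) (int p ^ 2 * (int x + int y))" using d2 by simp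
    thus ?thesis using Mg by (simp add: gcd_mult_left abs_mult)
  qed
  have MD: "int M dvd D"
  proof -
    have "int M dvd int x * int y" "int M dvd int x + int y" using Mg by auto
    hence "int M dvd 4 * (int x * int y) - int p * (int x + int y)" by (simp add: dvd_diff)
    thus ?thesis unfolding D_def by (simp add: algebra_simps)
  qed
  have npx: "\<not> p dvd x" using xp assms(2) by (auto dest: dvd_imp_le)
  have npM: "\<not> p dvd M"
    proof
      assume "p dvd M"
      hence "p dvd x * y" "p dvd x + y" unfolding M_def by auto
      hence "p dvd y" using npx assms(1) prime_dvd_mult_iff by blast
      hence "p dvd x" using \<open>p dvd x + y\<close> by (simp add: dvd_add_left_iff)
      thus False using npx by simp
    qed
  have Mpos: "M > 0" unfolding M_def using assms(2) by simp
  obtain q where q: "D = int M * q" using MD by (auto elim: dvdE)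
  have qpos: "q > 0" using q Dpos Mpos by (simp add: zero_less_mult_iff)
  have "int M * q dvd int M * int p ^ 2" using d3 q by (simp add: ac_simps)
  hence "q dvd int p ^ 2" using Mpos by simp
  define Q where "Q = nat q"
  have qQ: "q = int Q" unfolding Q_def using qpos by simp
  have "Q dvd p ^ 2" using \<open>q dvd int p ^ 2\<close> qQ by (simp add: int_dvd_int_iff flip: of_nat_power)
  then obtain k where k: "k \<le> 2" "Q = p ^ k" using divides_primepow_nat assms(1) by blast
  have "1 * q \<le> int M * q" using Mpos qpos by (intro mult_right_mono) auto
  hence "q \<le> D" using q by simp
  also have "D \<le> int p * int x" by (rule Dle)
  also have "\<dots> < int p * int p" using xp p0 by simp
  finally have "Q < p * p" using qQ by (simp flip: of_nat_mult)
  hence "k \<noteq> 2" using k by (auto simp: power2_eq_square)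
  hence "k = 0 \<or> k = 1" using k by linarith
  hence q1: "q = 1 \<or> q = int p" using k qQ by auto
  show ?thesis
  proof (cases "p dvd y")
    case True
    hence gy: "gcd y p = p" by (simp add: gcd_nat.absorb2)
    have "int p dvd D" unfolding D_def using True by (auto simp: algebra_simps)
    hence "int p dvd int M * q" using q by simp
    moreover have "\<not> int p dvd int M" using npM by (simp add: int_dvd_int_iff)
    ultimately have "q = int p" using q1 by auto
    thus ?thesis using q gy unfolding D_def M_def by simp
  next
    case False
    hence gy: "gcd y p = 1" using assms(1) by (metis coprime_commute prime_imp_coprime coprime_iff_gcd_eq_1)
    have "q = 1"
    proof (rule ccontr)
      assume "q \<noteq> 1"
      hence "q = int p" using q1 by simp
      hence "int p dvd D" using q by simp
      hence "int p dvd 4 * int x * int y" unfolding D_def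
        by (metis dvd_diff_commute dvd_add_right_iff dvd_triv_right diff_add_cancel)
      hence "p dvd 4 * x * y" by (metis int_dvd_int_iff of_nat_mult of_nat_numeral)
      hence "p dvd 4" using npx False assms(1) prime_dvd_mult_iff by blast
      hence "p dvd 2 * 2" by simp
      hence p2: "p = 2" using assms(1) by (metis prime_dvd_mult_iff primes_dvd_imp_eq two_is_prime_nat)
      hence "x = 1" using x4 assms(2) by simp
      hence "D = 2 * int y - 2" unfolding D_def using p2 by simp
      hence "y = 2" using Dle Dpos p2 \<open>x = 1\<close> by simp
      thus False using False p2 by simp
    qed
    thus ?thesis using q gy unfolding D_def M_def by simp
  qed
qed

end
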